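(* Let $b$ be a prime, $m$ a positive integer and $N=b^m$. Let $0\le w_1\le w_2\le\dotsb$ be integers and, for each $j$, let $$\mathcal{Z}_{N,w_j}=\begin{cases}\{z\in\{1,\dotsc,b^{m-w_j}-1\}:\gcd(z,b^m)=1\} & \text{if } w_j<m,\\ \{1\} & \text{if } w_j\ge m.\end{cases}$$ Let $(\gamma_j)_{j\ge1}$ be a non-increasing sequence of product weights with $0<\gamma_j\le 1$, put $\beta_j=1+\gamma_j$ and $$S_N=\sum_{\substack{-\frac{N}{2}<h\le\frac{N}{2}\\ h\neq 0}}\frac{1}{|h|}.$$ For $\mathbf{z}=(z_1,\dotsc,z_d)$ define $$R_{N,\boldsymbol{\gamma}}^d(\mathbf{z})=\frac{1}{N}\sum_{k=0}^{N-1}\prod_{j=1}^d\left(\beta_j+\gamma_j\sum_{\substack{-\frac{N}{2}<h\le\frac{N}{2}\\ h\neq 0}}\frac{\mathrm{e}^{2\pi\mathrm{i} h k z_j/N}}{|h|}\right)-\prod_{j=1}^d\beta_j .$$ Let $\mathbf{z}=(b^{w_1}z_1,\dotsc,b^{w_s}z_s)$ be constructed by the reduced component-by-component algorithm: set $z_1=1$, and for $d=1,\dotsc,s-1$, with $z_1,\dotsc,z_d$ already fixed, choose $z_{d+1}\in\mathcal{Z}_{N,w_{d+1}}$ minimizing $R_{N,\boldsymbol{\gamma}}^{d+1}(b^{w_1}z_1,\dotsc,b^{w_d}z_d,b^{w_{d+1}}z)$ as a function of $z\in\mathcal{Z}_{N,w_{d+1}}$. Then for every $d\in\{1,\dotsc,s\}$,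 $$R_{N,\boldsymbol{\gamma}}^{d}\left(b^{w_1}z_1,\dotsc,b^{w_d}z_d\right)\le\frac{1}{N}\prod_{j=1}^d\left(\beta_j+\left(1+2b^{\min\{w_j,m\}}\right)\gamma_j S_N\right).$$
   Context: Lattice point sets $P_N(\mathbf{z})=\{\{k\mathbf{z}/N\}:k\}$ with $N=b^m$ points and generating vectors whose $j$-th component is restricted to $b^{w_j}\mathcal{Z}_{N,w_j}$ (reduced search space). The quantity $R_{N,\boldsymbol{\gamma}}^d$ controls the weighted star discrepancy via $D^*_{N,\boldsymbol{\gamma}}(\mathbf{z})\le \sum_{\mathfrak{u}\subseteq[s]}\gamma_{\mathfrak{u}}(1-(1-1/N)^{|\mathfrak{u}|})+\frac12 R_{N,\boldsymbol{\gamma}}^s(\mathbf{z})$. *)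

theory Defs
  imports "HOL-Analysis.Analysis"
begin

definition Zset :: "nat \<Rightarrow> nat \<Rightarrow> nat \<Rightarrow> nat set" where
  "Zset b m w = (if w < m then {z \<in> {1..b ^ (m - w) - 1}. coprime z (b ^ m)} else {1})"

definition Hset :: "nat \<Rightarrow> int set" where
  "Hset N = {h::int. - int N < 2 * h \<and> 2 * h \<le> int N \<and> h \<noteq> 0}"

definition S_N :: "nat \<Rightarrow> real" where
  "S_N N = (\<Sum>h\<in>Hset N. 1 / \<bar>real_of_int h\<bar>)"

text \<open>The expression is real-valued (terms h and -h are
  conjugate, and the h = N/2 term is real); we take the real part of the complex sum.\<close>
definition R_N :: "nat \<Rightarrow> (nat \<Rightarrow> real) \<Rightarrow> nat \<Rightarrow> (nat \<Rightarrow> nat) \<Rightarrow> real" where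
  "R_N N gamma d z =
     Re ((1 / of_nat N) * (\<Sum>k<N. \<Prod>j\<in>{1..d}.
        (complex_of_real (1 + gamma j) + complex_of_real (gamma j) *
          (\<Sum>h\<in>Hset N. exp (2 * complex_of_real pi * \<i> * of_int h * of_nat k * of_nat (z j) / of_nat N)
                          / complex_of_real \<bar>real_of_int h\<bar>))))
     - (\<Prod>j\<in>{1..d}. (1 + gamma j))"

end

theory Submission
  imports Defs
begin


definition E :: "nat \<Rightarrow> int \<Rightarrow> complex" where
  "E N t = exp (2 * complex_of_real pi * \<i> * of_int t / of_nat N)"

lemma E_add: "E N (x + y) = E N x * E N y"
  unfolding E_def by (simp add: exp_add[symmetric] distrib_left add_divide_distrib)

lemma E_pow: "E N (int k * t) = E N t ^ k"
proof -
  have "E N (int k * t) = exp (of_nat k * (2 * complex_of_real pi * \<i> * of_int t / of_nat N))"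
    unfolding E_def by (simp add: field_simps)
  thus ?thesis unfolding E_def by (metis exp_of_nat_mult times_divide_eq_right)
qed

lemma E_eq_1: assumes "N > 0" shows "E N t = 1 \<longleftrightarrow> int N dvd t"
proof -
  have "E N t = 1 \<longleftrightarrow> (\<exists>n::int. 2 * pi * of_int t / of_nat N = of_int (2 * n) * pi)"
    unfolding E_def exp_eq_1 by simp
  also have "\<dots> \<longleftrightarrow> (\<exists>n::int. (of_int t :: real) = of_int (n * int N))"
    using assms by (auto simp: field_simps)
  also have "\<dots> \<longleftrightarrow> int N dvd t"
    by (metis dvd_def mult.commute of_int_eq_iff)
  finally show ?thesis .
qed

lemma E_N: assumes "N > 0" shows "E N t ^ N = 1"
  using E_pow[where k=N and t=t and N=N, symmetric] E_eq_1[OF assms, of "int N * t"] by simp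

lemma orth: assumes "N > 0"
  shows "(\<Sum>k<N. E N (int k * t)) = (if int N dvd t then of_nat N else 0)"
proof -
  have "(\<Sum>k<N. E N (int k * t)) = (\<Sum>k<N. E N t ^ k)" by (simp add: E_pow)
  also have "\<dots> = (if int N dvd t then of_nat N else 0)"
    using E_N[OF assms, of t] E_eq_1[OF assms, of t] by (simp add: sum_gp_strict)
  finally show ?thesis .
qed

definition F :: "nat \<Rightarrow> (nat \<Rightarrow> real) \<Rightarrow> nat \<Rightarrow> (nat \<Rightarrow> nat) \<Rightarrow> nat \<Rightarrow> complex" where
  "F N gamma d z k = (\<Prod>j\<in>{1..d}.
        (complex_of_real (1 + gamma j) + complex_of_real (gamma j) *
          (\<Sum>h\<in>Hset N. exp (2 * complex_of_real pi * \<i> * of_int h * of_nat k * of_nat (z j) / of_nat N)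
                          / complex_of_real \<bar>real_of_int h\<bar>)))"

lemma R_N_F: "R_N N gamma d z = Re ((1 / of_nat N) * (\<Sum>k<N. F N gamma d z k)) - (\<Prod>j\<in>{1..d}. (1 + gamma j))"
  unfolding R_N_def F_def by simp

lemma exp_E: "exp (2 * complex_of_real pi * \<i> * of_int h * of_nat k * of_nat zj / of_nat N) = E N (h * int k * int zj)"
  unfolding E_def by (simp add: mult.assoc)

lemma F_Suc: "F N gamma (Suc d) z k = F N gamma d z k *
   (complex_of_real (1 + gamma (Suc d)) + complex_of_real (gamma (Suc d)) *
          (\<Sum>h\<in>Hset N. E N (h * int k * int (z (Suc d))) / complex_of_real \<bar>real_of_int h\<bar>))"
  unfolding F_def by (simp add: exp_E prod.cl_ivl_Suc)

lemma F_0: "F N gamma 0 z k = 1" unfolding F_def by simp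

primrec G :: "nat \<Rightarrow> (nat \<Rightarrow> real) \<Rightarrow> (nat \<Rightarrow> nat) \<Rightarrow> nat \<Rightarrow> int \<Rightarrow> real" where
  "G N gamma z 0 a = (if int N dvd a then 1 else 0)"
| "G N gamma z (Suc d) a = (1 + gamma (Suc d)) * G N gamma z d a
     + gamma (Suc d) * (\<Sum>h\<in>Hset N. G N gamma z d (a - h * int (z (Suc d))) / \<bar>real_of_int h\<bar>)"

lemma F_G: assumes "N > 0"
  shows "(1 / of_nat N) * (\<Sum>k<N. F N gamma d z k * E N (- (int k * a))) = complex_of_real (G N gamma z d a)"
proof (induction d arbitrary: a)
  case 0
  have "(\<Sum>k<N. E N (- (int k * a))) = (\<Sum>k<N. E N (int k * (- a)))" by simp
  also have "\<dots> = (if int N dvd a then of_nat N else 0)" using orth[OF assms, of "-a"] by simp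
  finally show ?case using assms by (simp add: F_0)
next
  case (Suc d)
  define y where "y = int (z (Suc d))"
  define bt where "bt = complex_of_real (1 + gamma (Suc d))"
  define gm where "gm = complex_of_real (gamma (Suc d))"
  have e: "E N (h * int k * y) * E N (- (int k * a)) = E N (- (int k * (a - h * y)))" for h k
    by (simp add: E_add[symmetric] algebra_simps)
  have "(\<Sum>k<N. F N gamma (Suc d) z k * E N (- (int k * a)))
     = (\<Sum>k<N. bt * (F N gamma d z k * E N (- (int k * a)))
         + gm * (\<Sum>h\<in>Hset N. F N gamma d z k * E N (- (int k * (a - h * y))) / complex_of_real \<bar>real_of_int h\<bar>))"
  proof (rule sum.cong[OF refl])
    fix k
    have "(\<Sum>h\<in>Hset N. E N (h * int k * y) / complex_of_real \<bar>real_of_int h\<bar>) * (F N gamma d z k * E N (- (int k * a)))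
       = (\<Sum>h\<in>Hset N. F N gamma d z k * E N (- (int k * (a - h * y))) / complex_of_real \<bar>real_of_int h\<bar>)"
      unfolding sum_distrib_right
      by (rule sum.cong[OF refl]) (simp only: e[symmetric], simp add: divide_inverse ac_simps)
    thus "F N gamma (Suc d) z k * E N (- (int k * a)) = bt * (F N gamma d z k * E N (- (int k * a)))
         + gm * (\<Sum>h\<in>Hset N. F N gamma d z k * E N (- (int k * (a - h * y))) / complex_of_real \<bar>real_of_int h\<bar>)"
      unfolding F_Suc bt_def[symmetric] gm_def[symmetric] y_def[symmetric]
      by (simp add: algebra_simps)
  qed
  also have "\<dots> = bt * (\<Sum>k<N. F N gamma d z k * E N (- (int k * a)))
       + gm * (\<Sum>h\<in>Hset N. (\<Sum>k<N. F N gamma d z k * E N (- (int k * (a - h * y)))) / complex_of_real \<bar>real_of_int h\<bar>)"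
    by (simp add: sum.distrib sum_distrib_left sum_divide_distrib[symmetric] sum.swap[of _ "Hset N"])
  finally have "(1 / of_nat N) * (\<Sum>k<N. F N gamma (Suc d) z k * E N (- (int k * a)))
     = bt * ((1 / of_nat N) * (\<Sum>k<N. F N gamma d z k * E N (- (int k * a))))
       + gm * (\<Sum>h\<in>Hset N. ((1 / of_nat N) * (\<Sum>k<N. F N gamma d z k * E N (- (int k * (a - h * y))))) / complex_of_real \<bar>real_of_int h\<bar>)"
    by (simp add: distrib_left sum_distrib_left)
  also have "\<dots> = bt * complex_of_real (G N gamma z d a)
       + gm * (\<Sum>h\<in>Hset N. complex_of_real (G N gamma z d (a - h * y)) / complex_of_real \<bar>real_of_int h\<bar>)"
    using Suc.IH by simp
  finally show ?case by (simp add: bt_def gm_def y_def)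
qed



lemma R_N_G: assumes "N > 0" shows "R_N N gamma d z = G N gamma z d 0 - (\<Prod>j\<in>{1..d}. (1 + gamma j))"
proof -
  have "E N 0 = 1" unfolding E_def by simp
  hence "(1 / of_nat N) * (\<Sum>k<N. F N gamma d z k) = complex_of_real (G N gamma z d 0)"
    using F_G[OF assms, of gamma d z 0] by simp
  thus ?thesis unfolding R_N_F by simp
qed

lemma finite_Hset: "finite (Hset N)"
proof -
  have "Hset N \<subseteq> {- int N..int N}" unfolding Hset_def by auto
  thus ?thesis by (rule finite_subset) simp
qed

lemma G_local: "(\<forall>j\<in>{1..d}. z j = z' j) \<Longrightarrow> G N gamma z d a = G N gamma z' d a"
  by (induction d arbitrary: a) auto

lemma G_periodic: "G N gamma z d (a + int N * t) = G N gamma z d a"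
proof (induction d arbitrary: a)
  case 0
  then show ?case by (simp add: dvd_add_left_iff)
next
  case (Suc d)
  have "G N gamma z d (a + int N * t - h * int (z (Suc d))) = G N gamma z d (a - h * int (z (Suc d)))" for h
    using Suc.IH[of "a - h * int (z (Suc d))"] by (simp add: algebra_simps)
  then show ?case using Suc.IH by simp
qed

lemma G_mod: assumes "N > 0" shows "G N gamma z d a = G N gamma z d (a mod int N)"
  using G_periodic[of N gamma z d "a mod int N" "a div int N"] by (simp add: mult.commute)

lemma G_nonneg: "(\<forall>j\<in>{1..d}. gamma j \<ge> 0) \<Longrightarrow> G N gamma z d a \<ge> 0"
proof (induction d arbitrary: a)
  case 0 then show ?case by simp
next
  case (Suc d)
  hence IH: "G N gamma z d c \<ge> 0" for c by simp
  have g: "gamma (Suc d) \<ge> 0" using Suc.prems by simp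
  show ?case using IH g by (simp add: sum_nonneg)
qed

lemma shift_sum: assumes "N > 0" and per: "\<And>x. f x = f (x mod int N)"
  shows "(\<Sum>a\<in>{0..<int N}. f (a - c)) = (\<Sum>a\<in>{0..<int N}. (f a :: real))"
proof -
  have bij: "bij_betw (\<lambda>a. (a - c) mod int N) {0..<int N} {0..<int N}"
  proof (rule bij_betw_imageI)
    show "inj_on (\<lambda>a. (a - c) mod int N) {0..<int N}"
    proof (rule inj_onI)
      fix x y assume "x \<in> {0..<int N}" "y \<in> {0..<int N}" and e: "(x - c) mod int N = (y - c) mod int N"
      moreover have "((x - c) + c) mod int N = ((y - c) + c) mod int N"
        by (rule mod_add_cong[OF e refl])
      ultimately show "x = y" by simp
    qed
    show "(\<lambda>a. (a - c) mod int N) ` {0..<int N} = {0..<int N}"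
    proof
      show "(\<lambda>a. (a - c) mod int N) ` {0..<int N} \<subseteq> {0..<int N}" using assms by auto
      show "{0..<int N} \<subseteq> (\<lambda>a. (a - c) mod int N) ` {0..<int N}"
      proof
        fix x assume x: "x \<in> {0..<int N}"
        have "(((x + c) mod int N) - c) mod int N = x"
          using x by (simp add: mod_diff_left_eq)
        moreover have "(x + c) mod int N \<in> {0..<int N}" using assms by simp
        ultimately show "x \<in> (\<lambda>a. (a - c) mod int N) ` {0..<int N}" by (metis image_eqI)
      qed
    qed
  qed
  have "(\<Sum>a\<in>{0..<int N}. f (a - c)) = (\<Sum>a\<in>{0..<int N}. f ((a - c) mod int N))"
    using per by simp
  also have "\<dots> = (\<Sum>a\<in>{0..<int N}. f a)"
    using sum.reindex_bij_betw[OF bij, of f] by simp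
  finally show ?thesis .
qed

lemma G_total: assumes "N > 0"
  shows "(\<Sum>a\<in>{0..<int N}. G N gamma z d a) = (\<Prod>j\<in>{1..d}. (1 + gamma j + gamma j * S_N N))"
proof (induction d)
  case 0
  have "(\<Sum>a\<in>{0..<int N}. (if int N dvd a then 1 else 0::real)) = (\<Sum>a\<in>{0..<int N}. (if a = 0 then 1 else 0))"
    by (rule sum.cong[OF refl]) (auto simp: zdvd_not_zless)
  also have "\<dots> = 1" using assms by simp
  finally show ?case by simp
next
  case (Suc d)
  have sh: "(\<Sum>a\<in>{0..<int N}. G N gamma z d (a - c)) = (\<Sum>a\<in>{0..<int N}. G N gamma z d a)" for c
    by (rule shift_sum[OF assms]) (rule G_mod[OF assms])
  have "(\<Sum>a\<in>{0..<int N}. G N gamma z (Suc d) a)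
     = (1 + gamma (Suc d)) * (\<Sum>a\<in>{0..<int N}. G N gamma z d a)
       + gamma (Suc d) * (\<Sum>h\<in>Hset N. (\<Sum>a\<in>{0..<int N}. G N gamma z d (a - h * int (z (Suc d)))) / \<bar>real_of_int h\<bar>)"
    by (simp add: sum.distrib sum_distrib_left sum_divide_distrib sum.swap[of _ "Hset N"])
  also have "\<dots> = (1 + gamma (Suc d)) * (\<Sum>a\<in>{0..<int N}. G N gamma z d a)
       + gamma (Suc d) * S_N N * (\<Sum>a\<in>{0..<int N}. G N gamma z d a)"
    unfolding sh S_N_def by (simp add: sum_distrib_right)
  finally show ?case using Suc.IH by (simp add: prod.cl_ivl_Suc algebra_simps)
qed

lemma G_decomp: assumes "N > 0"
  shows "G N gamma z d c = (\<Sum>a\<in>{0..<int N}. (if int N dvd (a - c) then G N gamma z d a else 0))"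
proof -
  have "(\<Sum>a\<in>{0..<int N}. (if int N dvd (a - c) then G N gamma z d a else 0))
      = (\<Sum>a\<in>{0..<int N}. (if a = c mod int N then G N gamma z d a else 0))"
  proof (rule sum.cong[OF refl])
    fix a assume a: "a \<in> {0..<int N}"
    have "int N dvd (a - c) \<longleftrightarrow> a mod int N = c mod int N" by (simp add: mod_eq_dvd_iff)
    also have "\<dots> \<longleftrightarrow> a = c mod int N" using a by simp
    finally show "(if int N dvd (a - c) then G N gamma z d a else 0) = (if a = c mod int N then G N gamma z d a else 0)"
      by simp
  qed
  also have "\<dots> = G N gamma z d (c mod int N)" using assms by (simp add: sum.delta')
  also have "\<dots> = G N gamma z d c" using G_mod[OF assms] by simp
  finally show ?thesis by simp
qed



lemma S_N_nonneg: "S_N N \<ge> 0"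
  unfolding S_N_def by (rule sum_nonneg) simp

lemma reindex_bound: assumes g: "(g::int) > 0"
  shows "(\<Sum>h\<in>Hset N. (if g dvd h then real_of_int g / \<bar>real_of_int h\<bar> else 0)) \<le> S_N N"
proof -
  define L where "L = {l. g * l \<in> Hset N}"
  have LH: "L \<subseteq> Hset N"
  proof
    fix l assume "l \<in> L"
    hence l: "- int N < 2 * (g * l)" "2 * (g * l) \<le> int N" "g * l \<noteq> 0" unfolding L_def Hset_def by auto
    have "l \<noteq> 0" using l by auto
    moreover have "- int N < 2 * l \<and> 2 * l \<le> int N"
    proof (cases "l > 0")
      case True
      hence "l \<le> g * l" using g by (simp add: mult_le_cancel_right1)
      thus ?thesis using l True by linarith
    next
      case False
      hence "g * l \<le> l" using g by (simp add: mult_le_cancel_right2 mult_le_cancel_right1 mult_nonpos_nonneg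
            mult_le_cancel_right)
      thus ?thesis using l False by linarith
    qed
    ultimately show "l \<in> Hset N" unfolding Hset_def by auto
  qed
  have fin: "finite (Hset N)" by (rule finite_Hset)
  have "(\<Sum>h\<in>Hset N. (if g dvd h then real_of_int g / \<bar>real_of_int h\<bar> else 0))
      = (\<Sum>h\<in>{h\<in>Hset N. g dvd h}. real_of_int g / \<bar>real_of_int h\<bar>)"
    using fin by (simp add: sum.inter_filter)
  also have "{h\<in>Hset N. g dvd h} = (\<lambda>l. g * l) ` L" unfolding L_def by (auto simp: dvd_def)
  also have "(\<Sum>h\<in>(\<lambda>l. g * l) ` L. real_of_int g / \<bar>real_of_int h\<bar>)
      = (\<Sum>l\<in>L. real_of_int g / \<bar>real_of_int (g * l)\<bar>)"
    using sum.reindex[of "\<lambda>l. g * l" L "\<lambda>h. real_of_int g / \<bar>real_of_int h\<bar>"] g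
    by (simp add: inj_on_def o_def)
  also have "\<dots> = (\<Sum>l\<in>L. 1 / \<bar>real_of_int l\<bar>)"
    using g by (intro sum.cong refl) (simp add: abs_mult)
  also have "\<dots> \<le> (\<Sum>l\<in>Hset N. 1 / \<bar>real_of_int l\<bar>)"
    by (rule sum_mono2[OF fin LH]) simp
  finally show ?thesis unfolding S_N_def .
qed

lemma card_class:
  fixes A :: "nat set" and q g :: int
  assumes q: "q > 0" and g: "g > 0" and lt: "\<And>z. z \<in> A \<Longrightarrow> int z < q * g"
    and dv: "\<And>z1 z2. z1 \<in> A \<Longrightarrow> z2 \<in> A \<Longrightarrow> q dvd (int z1 - int z2)"
  shows "card A \<le> nat g"
proof -
  have inj: "inj_on (\<lambda>z. int z div q) A"
  proof (rule inj_onI)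
    fix x y assume x: "x \<in> A" and y: "y \<in> A" and e: "int x div q = int y div q"
    have "int x mod q = int y mod q" using dv[OF x y] by (simp add: mod_eq_dvd_iff)
    hence "int x = int y" using e by (metis div_mult_mod_eq)
    thus "x = y" by simp
  qed
  have im: "(\<lambda>z. int z div q) ` A \<subseteq> {0..<g}"
  proof
    fix u assume "u \<in> (\<lambda>z. int z div q) ` A"
    then obtain z where z: "z \<in> A" "u = int z div q" by auto
    have "int z div q < g" using lt[OF z(1)] q
      by (smt (verit, best) div_minus_minus div_mult_self3 mult.commute mult_minus_right neg_imp_zdiv_neg_iff)
    thus "u \<in> {0..<g}" using z q by (simp add: pos_imp_zdiv_nonneg_iff)
  qed
  have "card A = card ((\<lambda>z. int z div q) ` A)" using card_image[OF inj] by simp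
  also have "\<dots> \<le> card {0..<g}" by (rule card_mono[OF _ im]) simp
  finally show ?thesis by simp
qed



lemma gcd_fact:
  fixes b m w z :: nat and a h :: int
  assumes cop: "coprime z (b ^ m)" and dv: "int (b ^ m) dvd a + h * int (b ^ w * z)" and wm: "w \<le> m"
  shows "int (b ^ w) * gcd h (int (b ^ (m - w))) = gcd a (int (b ^ m))"
proof -
  define N where "N = int (b ^ m)"
  define X where "X = h * int (b ^ w) * int z"
  have NM: "N = int (b ^ w) * int (b ^ (m - w))"
    unfolding N_def using wm by (simp add: power_add[symmetric])
  obtain t where t: "a + X = N * t" using dv unfolding N_def X_def by (auto simp: dvd_def mult.assoc)
  have ae: "a = t * N + (- X)" using t by (simp add: algebra_simps)
  have "gcd a N = gcd N (t * N + (- X))" using ae by (simp add: gcd.commute)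
  also have "gcd N (t * N + (- X)) = gcd N (- X)" by (rule gcd_add_mult)
  also have "\<dots> = gcd N ((h * int (b ^ w)) * int z)" unfolding X_def by simp
  also have "\<dots> = gcd N (h * int (b ^ w))"
    by (rule gcd_mult_right_right_cancel) (use cop in \<open>simp add: N_def coprime_commute\<close>)
  also have "\<dots> = gcd (int (b ^ w) * int (b ^ (m - w))) (int (b ^ w) * h)" by (simp add: NM mult.commute)
  also have "\<dots> = int (b ^ w) * gcd (int (b ^ (m - w))) h"
    using gcd_mult_distrib_int[of "int (b ^ w)" "int (b ^ (m - w))" h] by simp
  finally show ?thesis by (simp add: N_def gcd.commute)
qed

lemma dvd_fact:
  fixes b m w :: nat and x h :: int
  assumes dv: "int (b ^ m) dvd int (b ^ w) * (h * x)" and wm: "w \<le> m" and b: "b > 0" and h: "h \<noteq> 0"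
  shows "(int (b ^ (m - w)) div gcd h (int (b ^ (m - w)))) dvd x"
proof -
  define M where "M = int (b ^ (m - w))"
  define g where "g = gcd h M"
  have NM: "int (b ^ m) = int (b ^ w) * M"
    unfolding M_def using wm by (simp add: power_add[symmetric])
  have "M dvd h * x" using dv b unfolding NM by (simp add: dvd_times_left_cancel_iff)
  have g0: "g \<noteq> 0" using h unfolding g_def by simp
  have hg: "h = g * (h div g)" unfolding g_def by simp
  have Mg: "M = g * (M div g)" unfolding g_def by simp
  have "g * (M div g) dvd g * ((h div g) * x)"
    using \<open>M dvd h * x\<close> by (metis Mg hg mult.assoc)
  hence "M div g dvd (h div g) * x" using g0 by (simp add: dvd_times_left_cancel_iff)
  moreover have "coprime (M div g) (h div g)"
    using div_gcd_coprime[of h M] h unfolding g_def by (simp add: coprime_commute)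
  ultimately have "M div g dvd x" by (simp add: coprime_dvd_mult_right_iff)
  thus ?thesis unfolding M_def g_def .
qed

lemma Zset_sub: "w < m \<Longrightarrow> Zset b m w \<subseteq> {1..b ^ (m - w) - 1}"
  unfolding Zset_def by auto

lemma finite_Zset: "finite (Zset b m w)"
  unfolding Zset_def by auto

lemma count_bound:
  fixes b m w :: nat and a :: int
  assumes pb: "prime b" and wm: "w < m"
  shows "(\<Sum>z\<in>Zset b m w. \<Sum>h\<in>Hset (b ^ m).
           (if int (b ^ m) dvd (a + h * int (b ^ w * z)) then 1 / \<bar>real_of_int h\<bar> else 0)) \<le> S_N (b ^ m)"
proof -
  define N where "N = b ^ m"
  define M where "M = b ^ (m - w)"
  define Z where "Z = Zset b m w"
  define A where "A h = {z\<in>Z. int N dvd (a + h * int (b ^ w * z))}" for h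
  have b0: "b > 0" using pb prime_gt_0_nat by blast
  have M0: "M > 0" unfolding M_def using b0 by simp
  have finZ: "finite Z" unfolding Z_def by (rule finite_Zset)
  have Zcop: "z \<in> Z \<Longrightarrow> coprime z (b ^ m)" for z unfolding Z_def Zset_def using wm by auto
  have Zlt: "z \<in> Z \<Longrightarrow> z < M" for z using Zset_sub[OF wm, of b] M0 unfolding Z_def M_def by force
  have "(\<Sum>z\<in>Z. \<Sum>h\<in>Hset N. (if int N dvd (a + h * int (b ^ w * z)) then 1 / \<bar>real_of_int h\<bar> else 0))
      = (\<Sum>h\<in>Hset N. \<Sum>z\<in>Z. (if int N dvd (a + h * int (b ^ w * z)) then 1 / \<bar>real_of_int h\<bar> else 0))"
    by (rule sum.swap)
  also have "\<dots> = (\<Sum>h\<in>Hset N. real (card (A h)) / \<bar>real_of_int h\<bar>)"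
  proof (rule sum.cong[OF refl])
    fix h
    show "(\<Sum>z\<in>Z. (if int N dvd (a + h * int (b ^ w * z)) then 1 / \<bar>real_of_int h\<bar> else 0))
        = real (card (A h)) / \<bar>real_of_int h\<bar>"
      using finZ unfolding A_def by (simp add: sum.inter_filter[symmetric])
  qed
  also have "\<dots> \<le> S_N N"
  proof (cases "\<forall>h\<in>Hset N. A h = {}")
    case True
    hence "(\<Sum>h\<in>Hset N. real (card (A h)) / \<bar>real_of_int h\<bar>) = 0" by simp
    thus ?thesis using S_N_nonneg by simp
  next
    case False
    then obtain h0 z0 where h0: "h0 \<in> Hset N" "z0 \<in> A h0" by auto
    define g0 where "g0 = gcd h0 (int M)"
    have gcdeq: "int (b ^ w) * gcd h (int M) = gcd a (int N)" if "z \<in> A h" for h z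
      using gcd_fact[of z b m a h w] that Zcop wm unfolding A_def M_def N_def by auto
    have g0pos: "g0 > 0" unfolding g0_def using M0 by simp
    have "(\<Sum>h\<in>Hset N. real (card (A h)) / \<bar>real_of_int h\<bar>)
        \<le> (\<Sum>h\<in>Hset N. (if g0 dvd h then real_of_int g0 / \<bar>real_of_int h\<bar> else 0))"
    proof (rule sum_mono)
      fix h assume hH: "h \<in> Hset N"
      have hnz: "h \<noteq> 0" using hH unfolding Hset_def by auto
      show "real (card (A h)) / \<bar>real_of_int h\<bar> \<le> (if g0 dvd h then real_of_int g0 / \<bar>real_of_int h\<bar> else 0)"
      proof (cases "A h = {}")
        case True then show ?thesis using g0pos by simp
      next
        case False
        then obtain z1 where z1: "z1 \<in> A h" by auto
        have "int (b ^ w) * gcd h (int M) = int (b ^ w) * g0"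
          using gcdeq[OF z1] gcdeq[OF h0(2)] unfolding g0_def by simp
        hence gh: "gcd h (int M) = g0" using b0 by simp
        define q where "q = int M div g0"
        have qg: "q * g0 = int M" unfolding q_def g0_def by simp
        have "0 < q * g0" using qg M0 by simp
        hence qpos: "q > 0" using g0pos zero_less_mult_pos2 by blast
        have "card (A h) \<le> nat g0"
        proof (rule card_class[OF qpos g0pos])
          fix z assume "z \<in> A h"
          hence "z < M" using Zlt unfolding A_def by auto
          thus "int z < q * g0" using qg by simp
        next
          fix x y assume x: "x \<in> A h" and y: "y \<in> A h"
          have "int N dvd (a + h * int (b ^ w * x)) - (a + h * int (b ^ w * y))"
            using x y unfolding A_def by (intro dvd_diff) auto
          hence "int (b ^ m) dvd int (b ^ w) * (h * (int x - int y))"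
            unfolding N_def by (simp add: algebra_simps)
          from dvd_fact[OF this less_imp_le[OF wm] b0 hnz]
          show "q dvd int x - int y" unfolding q_def gh[symmetric] M_def .
        qed
        hence "real (card (A h)) \<le> real_of_int g0" using g0pos by linarith
        moreover have "g0 dvd h" using gh by (metis gcd_dvd1)
        ultimately show ?thesis by (simp add: divide_right_mono)
      qed
    qed
    also have "\<dots> \<le> S_N N" by (rule reindex_bound[OF g0pos])
    finally show ?thesis .
  qed
  finally show ?thesis unfolding N_def Z_def .
qed



lemma cop_iff: "prime (b::nat) \<Longrightarrow> m > 0 \<Longrightarrow> coprime z (b ^ m) \<longleftrightarrow> \<not> b dvd z"
  by (meson coprime_common_divisor dvd_power not_prime_unit prime_imp_power_coprime_nat)

lemma card_Zset:
  assumes pb: "prime b" and wm: "w < m"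
  shows "real (b ^ (m - w)) \<le> 2 * real (card (Zset b m w))"
proof -
  define M where "M = b ^ (m - w)"
  define D where "D = {1..M - 1}"
  define Z where "Z = {z\<in>D. \<not> b dvd z}"
  define Y where "Y = {z\<in>D. b dvd z}"
  have m0: "m > 0" using wm by simp
  have ZZ: "Zset b m w = Z" unfolding Zset_def Z_def D_def M_def using wm cop_iff[OF pb m0] by auto
  have b1: "b > 1" using pb prime_gt_1_nat by blast
  have bM: "b dvd M" unfolding M_def using wm by (simp add: dvd_power)
  have "b ^ 1 \<le> b ^ (m - w)" by (rule power_increasing) (use wm b1 in auto)
  hence M2: "M \<ge> 2" unfolding M_def using b1 by simp
  have finD: "finite D" unfolding D_def by simp
  have cardD: "card D = card Z + card Y"
  proof -
    have "D = Z \<union> Y" "Z \<inter> Y = {}" unfolding Z_def Y_def by auto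
    thus ?thesis using finD card_Un_disjoint[of Z Y] unfolding Z_def Y_def by auto
  qed
  have "card Y \<le> card (Z - {1})"
  proof (rule card_inj_on_le)
    show "inj_on Suc Y" by simp
    show "finite (Z - {1})" using finD unfolding Z_def by simp
    show "Suc ` Y \<subseteq> Z - {1}"
    proof
      fix u assume "u \<in> Suc ` Y"
      then obtain z where z: "z \<in> Y" "u = Suc z" by auto
      have zD: "1 \<le> z" "z \<le> M - 1" "b dvd z" using z(1) unfolding Y_def D_def by auto
      have "z \<noteq> M - 1"
      proof
        assume "z = M - 1"
        hence "b dvd M - (M - 1)" using bM zD(3) by (metis dvd_diff_nat)
        hence "b dvd 1" using M2 by simp
        thus False using b1 by simp
      qed
      hence "Suc z \<le> M - 1" using zD by simp
      moreover have "\<not> b dvd Suc z"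
      proof
        assume "b dvd Suc z"
        hence "b dvd Suc z - z" using zD(3) by (metis dvd_diff_nat)
        thus False using b1 by simp
      qed
      ultimately show "u \<in> Z - {1}" using z zD unfolding Z_def D_def by auto
    qed
  qed
  moreover have "1 \<in> Z" unfolding Z_def D_def using M2 b1 by auto
  hence "card (Z - {1}) = card Z - 1" by simp
  moreover have "card D = M - 1" unfolding D_def by simp
  moreover have "card Z \<ge> 1" using \<open>1 \<in> Z\<close> finD unfolding Z_def
    by (metis (no_types, lifting) One_nat_def Suc_leI card_gt_0_iff empty_iff finite_subset mem_Collect_eq subsetI)
  ultimately have "M \<le> 2 * card Z" using cardD M2 by linarith
  hence "real M \<le> 2 * real (card Z)" by linarith
  thus ?thesis unfolding ZZ M_def .
qed



lemma R_step: assumes "N > 0"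
  shows "R_N N gamma (Suc d) z = (1 + gamma (Suc d)) * R_N N gamma d z
     + gamma (Suc d) * (\<Sum>h\<in>Hset N. G N gamma z d (- (h * int (z (Suc d)))) / \<bar>real_of_int h\<bar>)"
  unfolding R_N_G[OF assms] by (simp add: prod.cl_ivl_Suc algebra_simps)

lemma R_local: assumes "N > 0" "\<forall>j\<in>{1..d}. z j = z' j"
  shows "R_N N gamma d z = R_N N gamma d z'"
  unfolding R_N_G[OF assms(1)] using G_local[OF assms(2)] by simp

lemma Q_avg:
  assumes pb: "prime b" and xm: "x < m" and gam: "\<forall>j\<in>{1..d}. gamma j \<ge> 0"
  shows "(\<Sum>z\<in>Zset b m x. \<Sum>h\<in>Hset (b ^ m). G (b ^ m) gamma y d (- (h * int (b ^ x * z))) / \<bar>real_of_int h\<bar>)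
     \<le> S_N (b ^ m) * (\<Prod>j\<in>{1..d}. (1 + gamma j + gamma j * S_N (b ^ m)))"
proof -
  define N where "N = b ^ m"
  have N0: "N > 0" unfolding N_def using pb prime_gt_0_nat by simp
  define GG where "GG a = G N gamma y d a" for a
  have GGnn: "GG a \<ge> 0" for a unfolding GG_def using G_nonneg[OF gam] by blast
  have "(\<Sum>z\<in>Zset b m x. \<Sum>h\<in>Hset N. GG (- (h * int (b ^ x * z))) / \<bar>real_of_int h\<bar>)
      = (\<Sum>z\<in>Zset b m x. \<Sum>h\<in>Hset N. \<Sum>a\<in>{0..<int N}.
            GG a * (if int N dvd (a + h * int (b ^ x * z)) then 1 / \<bar>real_of_int h\<bar> else 0))"
  proof (intro sum.cong refl)
    fix z h
    have "GG (- (h * int (b ^ x * z))) = (\<Sum>a\<in>{0..<int N}. (if int N dvd (a - - (h * int (b ^ x * z))) then GG a else 0))"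
      unfolding GG_def by (rule G_decomp[OF N0])
    thus "GG (- (h * int (b ^ x * z))) / \<bar>real_of_int h\<bar> = (\<Sum>a\<in>{0..<int N}.
            GG a * (if int N dvd (a + h * int (b ^ x * z)) then 1 / \<bar>real_of_int h\<bar> else 0))"
      by (simp only: sum_divide_distrib) (intro sum.cong refl, simp)
  qed
  also have "\<dots> = (\<Sum>z\<in>Zset b m x. \<Sum>a\<in>{0..<int N}. \<Sum>h\<in>Hset N.
            GG a * (if int N dvd (a + h * int (b ^ x * z)) then 1 / \<bar>real_of_int h\<bar> else 0))"
    by (rule sum.cong[OF refl]) (rule sum.swap)
  also have "\<dots> = (\<Sum>a\<in>{0..<int N}. \<Sum>z\<in>Zset b m x. \<Sum>h\<in>Hset N.
            GG a * (if int N dvd (a + h * int (b ^ x * z)) then 1 / \<bar>real_of_int h\<bar> else 0))"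
    by (rule sum.swap)
  also have "\<dots> = (\<Sum>a\<in>{0..<int N}. GG a * (\<Sum>z\<in>Zset b m x. \<Sum>h\<in>Hset N.
            (if int N dvd (a + h * int (b ^ x * z)) then 1 / \<bar>real_of_int h\<bar> else 0)))"
    by (simp only: sum_distrib_left)
  also have "\<dots> \<le> (\<Sum>a\<in>{0..<int N}. GG a * S_N N)"
    by (rule sum_mono, rule mult_left_mono) (use count_bound[OF pb xm] GGnn in \<open>auto simp: N_def\<close>)
  also have "\<dots> = S_N N * (\<Sum>a\<in>{0..<int N}. GG a)" by (simp add: sum_distrib_left mult.commute)
  also have "(\<Sum>a\<in>{0..<int N}. GG a) = (\<Prod>j\<in>{1..d}. (1 + gamma j + gamma j * S_N N))"
    unfolding GG_def by (rule G_total[OF N0])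
  finally show ?thesis unfolding N_def GG_def .
qed



theorem theorem2:
  fixes b m s :: nat and w :: "nat \<Rightarrow> nat" and gamma :: "nat \<Rightarrow> real" and zz :: "nat \<Rightarrow> nat"
  assumes "prime b" and "m > 0"
    and w_mono: "\<And>j. j \<ge> 1 \<Longrightarrow> w j \<le> w (Suc j)"
    and gamma_pos: "\<And>j. j \<ge> 1 \<Longrightarrow> 0 < gamma j \<and> gamma j \<le> 1"
    and gamma_mono: "\<And>j. j \<ge> 1 \<Longrightarrow> gamma (Suc j) \<le> gamma j"
    and z1: "zz 1 = 1"
    and cbc_mem: "\<And>d. d \<in> {1..s-1} \<Longrightarrow> zz (d + 1) \<in> Zset b m (w (d + 1))"
    and cbc_min: "\<And>d z. d \<in> {1..s-1} \<Longrightarrow> z \<in> Zset b m (w (d + 1)) \<Longrightarrow>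
        R_N (b ^ m) gamma (d + 1) (\<lambda>j. b ^ w j * zz j)
          \<le> R_N (b ^ m) gamma (d + 1) ((\<lambda>j. b ^ w j * zz j)(d + 1 := b ^ w (d + 1) * z))"
  shows "\<forall>d\<in>{1..s}. R_N (b ^ m) gamma d (\<lambda>j. b ^ w j * zz j)
           \<le> 1 / real (b ^ m) * (\<Prod>j\<in>{1..d}. (1 + gamma j
                 + (1 + 2 * real b ^ min (w j) m) * gamma j * S_N (b ^ m)))"
proof -
  note pb = assms(1)
  define N where "N = b ^ m"
  define y where "y = (\<lambda>j. b ^ w j * zz j)"
  define S where "S = S_N N"
  define B where "B d = (\<Prod>j\<in>{1..d}. (1 + gamma j + (1 + 2 * real b ^ min (w j) m) * gamma j * S))" for d
  define Gt where "Gt d = (\<Prod>j\<in>{1..d}. (1 + gamma j + gamma j * S))" for d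
  have b0: "b > 0" using pb prime_gt_0_nat by blast
  have N0: "N > 0" unfolding N_def using b0 by simp
  have S0: "S \<ge> 0" unfolding S_def by (rule S_N_nonneg)
  have gnn: "\<forall>j\<in>{1..d}. gamma j \<ge> 0" for d using gamma_pos by (auto simp: less_imp_le)
  have B_nn: "B d \<ge> 0" for d unfolding B_def
    by (rule prod_nonneg) (use gamma_pos S0 in \<open>auto intro!: add_nonneg_nonneg mult_nonneg_nonneg simp: less_imp_le\<close>)
  have Gt_le: "Gt d \<le> B d" for d unfolding Gt_def B_def
  proof (rule prod_mono)
    fix j assume j: "j \<in> {1..d}"
    have g: "0 < gamma j" using gamma_pos j by auto
    have "gamma j * S \<le> (1 + 2 * real b ^ min (w j) m) * gamma j * S"
      using g S0 by (simp add: mult_right_mono mult_nonneg_nonneg)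
    thus "0 \<le> 1 + gamma j + gamma j * S \<and> 1 + gamma j + gamma j * S \<le> 1 + gamma j + (1 + 2 * real b ^ min (w j) m) * gamma j * S"
      using g S0 by (simp add: add_nonneg_nonneg)
  qed
  have B_Suc: "B (Suc d) = B d * (1 + gamma (Suc d) + (1 + 2 * real b ^ min (w (Suc d)) m) * gamma (Suc d) * S)" for d
    unfolding B_def by (simp add: prod.cl_ivl_Suc)
  have main: "1 \<le> d \<Longrightarrow> d \<le> s \<Longrightarrow> R_N N gamma d y \<le> B d / real N" for d
  proof (induction d)
    case 0 then show ?case by simp
  next
    case (Suc d)
    define x where "x = w (Suc d)"
    define g where "g = gamma (Suc d)"
    have gp: "0 < g" "g \<le> 1" unfolding g_def using gamma_pos by auto
    have RS: "R_N N gamma (Suc d) v = (1 + g) * R_N N gamma d v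
          + g * (\<Sum>h\<in>Hset N. G N gamma v d (- (h * int (v (Suc d)))) / \<bar>real_of_int h\<bar>)" for v
      unfolding g_def by (rule R_step[OF N0])
    show ?case
    proof (cases "d = 0")
      case True
      have R0: "R_N N gamma 0 y = 0" unfolding R_N_G[OF N0] by simp
      have y1: "y (Suc 0) = b ^ x" unfolding y_def x_def True using z1 by simp
      define Q where "Q = (\<Sum>h\<in>Hset N. G N gamma y 0 (- (h * int (b ^ x))) / \<bar>real_of_int h\<bar>)"
      have R1: "R_N N gamma 1 y = g * Q" using RS[of y] R0 y1 unfolding Q_def True by simp
      have Qnn: "0 \<le> Q" unfolding Q_def by (rule sum_nonneg) simp
      have B1: "B 1 = 1 + g + (1 + 2 * real b ^ min x m) * g * S"
        unfolding B_def g_def x_def True by simp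
      show ?thesis
      proof (cases "m \<le> x")
        case True
        have "Q \<le> S" unfolding Q_def S_def S_N_def by (rule sum_mono) simp
        have mm: "real b ^ min x m = real N" using True unfolding N_def by simp
        have "real N * (g * Q) \<le> real N * (g * S)" using \<open>Q \<le> S\<close> gp by (simp add: mult_left_mono)
        also have "\<dots> \<le> B 1" unfolding B1 mm using gp S0 N0
          by (simp add: algebra_simps add_nonneg_nonneg mult_nonneg_nonneg)
        finally have "real N * (g * Q) \<le> B 1" .
        thus ?thesis using R1 N0 \<open>d = 0\<close> by (simp add: field_simps)
      next
        case False
        hence xm: "x < m" by simp
        define M where "M = b ^ (m - x)"
        have NM: "N = b ^ x * M" unfolding N_def M_def using xm by (simp add: power_add[symmetric])
        have M0: "M > 0" unfolding M_def using b0 by simp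
        have "real M * Q = (\<Sum>h\<in>Hset N. real M * ((if int N dvd - (h * int (b ^ x)) then 1 else 0) / \<bar>real_of_int h\<bar>))"
          unfolding Q_def by (simp add: sum_distrib_left)
        also have "\<dots> \<le> (\<Sum>h\<in>Hset N. (if int M dvd h then real_of_int (int M) / \<bar>real_of_int h\<bar> else 0))"
        proof (rule sum_mono)
          fix h
          have "int N dvd - (h * int (b ^ x)) \<Longrightarrow> int M dvd h"
          proof -
            assume "int N dvd - (h * int (b ^ x))"
            hence "int (b ^ x) * int M dvd int (b ^ x) * (- h)" unfolding NM by (simp add: mult.commute)
            hence "int M dvd - h" using b0 by (simp add: dvd_times_left_cancel_iff)
            thus "int M dvd h" by simp
          qed
          thus "real M * ((if int N dvd - (h * int (b ^ x)) then 1 else 0) / \<bar>real_of_int h\<bar>)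
              \<le> (if int M dvd h then real_of_int (int M) / \<bar>real_of_int h\<bar> else 0)"
            by auto
        qed
        also have "\<dots> \<le> S" unfolding S_def by (rule reindex_bound) (use M0 in simp)
        finally have MQ: "real M * Q \<le> S" .
        have mm: "real b ^ min x m = real (b ^ x)" using xm by simp
        have "real N * (g * Q) = real (b ^ x) * g * (real M * Q)" unfolding NM by simp
        also have "\<dots> \<le> real (b ^ x) * g * S" using MQ gp by (simp add: mult_left_mono)
        also have "\<dots> \<le> B 1" unfolding B1 mm using gp S0
          by (simp add: algebra_simps add_nonneg_nonneg mult_nonneg_nonneg)
        finally have "real N * (g * Q) \<le> B 1" .
        thus ?thesis using R1 N0 \<open>d = 0\<close> by (simp add: field_simps)
      qed
    next
      case False
      hence d1: "1 \<le> d" by simp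
      have IH: "R_N N gamma d y \<le> B d / real N" using Suc d1 by simp
      have dS: "d \<in> {1..s-1}" using d1 Suc.prems by auto
      have Rnn: "0 \<le> R_N N gamma d y + (\<Prod>j\<in>{1..d}. (1 + gamma j))"
        unfolding R_N_G[OF N0] using G_nonneg[OF gnn] by simp
      have Bx: "B (Suc d) = B d * (1 + g + (1 + 2 * real b ^ min x m) * g * S)"
        unfolding B_Suc g_def x_def ..
      have Gtot: "(\<Sum>a\<in>{0..<int N}. G N gamma y d a) = Gt d"
        unfolding Gt_def S_def by (rule G_total[OF N0])
      have IH': "(1 + g) * R_N N gamma d y \<le> (1 + g) * (B d / real N)"
        using IH gp by (intro mult_left_mono) auto
      show ?thesis
      proof (cases "m \<le> x")
        case True
        have "Zset b m x = {1}" unfolding Zset_def using True by simp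
        hence zs: "zz (Suc d) = 1" using cbc_mem[OF dS] unfolding x_def by simp
        have ys: "y (Suc d) = b ^ x" unfolding y_def x_def zs by simp
        have Nd: "int N dvd int (b ^ x)" unfolding N_def using True by (simp add: le_imp_power_dvd)
        have Gh: "G N gamma y d (- (h * int (b ^ x))) = G N gamma y d 0" for h
        proof -
          have "(- (h * int (b ^ x))) mod int N = 0" using Nd by simp
          have "G N gamma y d (- (h * int (b ^ x))) = G N gamma y d ((- (h * int (b ^ x))) mod int N)"
            by (rule G_mod[OF N0])
          also have "\<dots> = G N gamma y d 0" using \<open>(- (h * int (b ^ x))) mod int N = 0\<close> by (simp only:)
          finally show ?thesis .
        qed
        have Q: "(\<Sum>h\<in>Hset N. G N gamma y d (- (h * int (y (Suc d)))) / \<bar>real_of_int h\<bar>) = S * G N gamma y d 0"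
          unfolding ys Gh S_def S_N_def by (simp add: sum_distrib_right divide_inverse mult.commute[of "G N gamma y d 0"])
        have "G N gamma y d 0 \<le> (\<Sum>a\<in>{0..<int N}. G N gamma y d a)"
          by (rule member_le_sum) (use G_nonneg[OF gnn] N0 in auto)
        hence G0B: "G N gamma y d 0 \<le> B d" using Gtot Gt_le[of d] by simp
        have mm: "real b ^ min x m = real N" using True unfolding N_def by simp
        have "R_N N gamma (Suc d) y = (1 + g) * R_N N gamma d y + g * (S * G N gamma y d 0)"
          using RS[of y] Q by simp
        also have "\<dots> \<le> (1 + g) * (B d / real N) + g * (S * B d)"
          using G0B gp S0 by (intro add_mono[OF IH'] mult_left_mono) auto
        also have "\<dots> \<le> B (Suc d) / real N"
        proof -
          have "real N * (g * (S * B d)) \<le> B d * ((1 + 2 * real N) * g * S)"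
          proof -
            have e: "B d * ((1 + 2 * real N) * g * S) = real N * (g * (S * B d)) + B d * g * S * (1 + real N)"
              by (simp add: algebra_simps)
            have "0 \<le> B d * g * S * (1 + real N)" using gp S0 B_nn[of d] by simp
            thus ?thesis using e by linarith
          qed
          hence le: "real N * (g * (S * B d)) \<le> B d * ((1 + 2 * real N) * g * S)" .
          have "(1 + g) * (B d / real N) + g * (S * B d) = (B d * (1 + g) + real N * (g * (S * B d))) / real N"
            using N0 by (simp add: field_simps)
          also have "\<dots> \<le> (B d * (1 + g) + B d * ((1 + 2 * real N) * g * S)) / real N"
            using le N0 by (intro divide_right_mono) auto
          also have "\<dots> = B (Suc d) / real N" unfolding Bx mm by (simp add: algebra_simps)
          finally show ?thesis .
        qed
        finally show ?thesis .
      next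
        case False
        hence xm: "x < m" by simp
        define Z where "Z = Zset b m x"
        define M where "M = b ^ (m - x)"
        have NM: "N = b ^ x * M" unfolding N_def M_def using xm by (simp add: power_add[symmetric])
        have cZ: "real M \<le> 2 * real (card Z)" unfolding Z_def M_def by (rule card_Zset[OF pb xm])
        have M0: "M > 0" unfolding M_def using b0 by simp
        have cZ0: "card Z > 0" using cZ M0 by simp
        define Qz where "Qz z = (\<Sum>h\<in>Hset N. G N gamma y d (- (h * int (b ^ x * z))) / \<bar>real_of_int h\<bar>)" for z
        have each: "R_N N gamma (Suc d) y \<le> (1 + g) * R_N N gamma d y + g * Qz z" if zZ: "z \<in> Z" for z
        proof -
          define v where "v = y(Suc d := b ^ x * z)"
          have loc: "\<forall>j\<in>{1..d}. v j = y j" unfolding v_def by auto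
          have "R_N N gamma (Suc d) y \<le> R_N N gamma (Suc d) v"
            using cbc_min[OF dS, of z] zZ unfolding Z_def v_def y_def N_def x_def by simp
          also have "\<dots> = (1 + g) * R_N N gamma d y + g * Qz z"
            unfolding RS[of v] R_local[OF N0 loc] Qz_def G_local[OF loc] by (simp add: v_def)
          finally show ?thesis .
        qed
        have "real (card Z) * R_N N gamma (Suc d) y = (\<Sum>z\<in>Z. R_N N gamma (Suc d) y)" by simp
        also have "\<dots> \<le> (\<Sum>z\<in>Z. (1 + g) * R_N N gamma d y + g * Qz z)"
          by (rule sum_mono) (rule each)
        also have "\<dots> = real (card Z) * ((1 + g) * R_N N gamma d y) + g * (\<Sum>z\<in>Z. Qz z)"
          by (simp add: sum.distrib sum_distrib_left)
        also have "(\<Sum>z\<in>Z. Qz z) \<le> S * Gt d"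
          unfolding Qz_def Z_def S_def Gt_def N_def by (rule Q_avg[OF pb xm gnn])
        finally have sumb: "real (card Z) * R_N N gamma (Suc d) y \<le> real (card Z) * ((1 + g) * R_N N gamma d y) + g * (S * Gt d)"
          using gp by (smt (verit) mult_left_mono)
        have "g * (S * Gt d) \<le> g * (S * B d)"
          using Gt_le[of d] gp S0 by (simp add: mult_left_mono)
        have R2: "R_N N gamma (Suc d) y \<le> (1 + g) * R_N N gamma d y + g * (S * B d) / real (card Z)"
        proof -
          have "real (card Z) * R_N N gamma (Suc d) y \<le> real (card Z) * ((1 + g) * R_N N gamma d y) + g * (S * B d)"
            using sumb \<open>g * (S * Gt d) \<le> g * (S * B d)\<close> by linarith
          thus ?thesis using cZ0 by (simp add: field_simps)
        qed
        have "g * (S * B d) / real (card Z) \<le> g * (S * B d) / (real M / 2)"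
          using cZ M0 gp S0 B_nn[of d] by (intro divide_left_mono) (auto intro: mult_nonneg_nonneg)
        also have "\<dots> = 2 * real (b ^ x) * g * S * B d / real N"
          unfolding NM using M0 b0 by (simp add: field_simps)
        finally have T2: "g * (S * B d) / real (card Z) \<le> 2 * real (b ^ x) * g * S * B d / real N" .
        have mm: "real b ^ min x m = real (b ^ x)" using xm by simp
        have "R_N N gamma (Suc d) y \<le> (1 + g) * (B d / real N) + 2 * real (b ^ x) * g * S * B d / real N"
          using R2 IH' T2 by linarith
        also have "\<dots> \<le> B (Suc d) / real N"
        proof -
          have "2 * real (b ^ x) * g * S * B d \<le> B d * ((1 + 2 * real (b ^ x)) * g * S)"
          proof -
            have e: "B d * ((1 + 2 * real (b ^ x)) * g * S) = 2 * real (b ^ x) * g * S * B d + B d * g * S"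
              by (simp add: algebra_simps)
            have "0 \<le> B d * g * S" using gp S0 B_nn[of d] by simp
            thus ?thesis using e by linarith
          qed
          hence le: "2 * real (b ^ x) * g * S * B d \<le> B d * ((1 + 2 * real (b ^ x)) * g * S)" .
          have "(1 + g) * (B d / real N) + 2 * real (b ^ x) * g * S * B d / real N
              = (B d * (1 + g) + 2 * real (b ^ x) * g * S * B d) / real N"
            using N0 by (simp add: field_simps)
          also have "\<dots> \<le> (B d * (1 + g) + B d * ((1 + 2 * real (b ^ x)) * g * S)) / real N"
            using le N0 by (intro divide_right_mono) auto
          also have "\<dots> = B (Suc d) / real N" unfolding Bx mm by (simp add: algebra_simps)
          finally show ?thesis .
        qed
        finally show ?thesis .
      qed
    qed
  qed
  show ?thesis using main unfolding N_def y_def B_def S_def by (auto simp: divide_inverse mult.commute)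
qed


end
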